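(* Let $I$ be a semigroup (or a monoid). Let $S$ be a set and for each $s\in S$ let $(B_s,\beta(s))$ be a semi-invertible $I$-set. Let $B=\prod_{s\in S}B_s$ with the $I$-action given by $\beta(s)$ on the $s$-th component. Let $(A,\alpha)$ and $(C,\gamma)$ be $I$-sets and let $f:A\to B$ and $g:B\to C$ be $I$-equivariant functions. Then $g\circ f:A\to C$ is $I$-equivariant.
   Context: For a set $X$, $\mathrm{End}_l(X)$ denotes self-maps of $X$ written on the left with product $f\circ g$ ($g$ first); $\mathrm{End}_r(X)$ denotes self-maps written on the right, $x\mapsto(x)f$, with $(x)(fg)=((x)f)g$. An $I$-set is a set $X$ with a pair $\xi=(\xi_l,\xi_r)$ of semigroup (resp. monoid) homomorphisms $\xi_l:I\to\mathrm{End}_l(X)$, $\xi_r:I\to\mathrm{End}_r(X)$ with $(\xi_l(i)(x))\xi_r(j)=\xi_l(i)((x)\xi_r(j))$ for all $i,j,x$. A function $f:X\to Y$ between $I$-sets $(X,\xi)$, $(Y,\eta)$ is $I$-equivariant if $(f(\xi_l(i)(x)))\eta_r(i)=\eta_l(i)(f((x)\xi_r(i)))$ for all $i\in I$, $x\in X$. An $I$-set $(X,\xi)$ is semi-invertible if for every $i\in I$, at least one of $\xi_l(i)$, $\xi_r(i)$ is a bijection of $X$. The product action on $\prod_s B_s$ is componentwise: $\beta_l(i)((b_s)_s)=(\beta(s)_l(i)(b_s))_s$ and $((b_s)_s)\beta_r(i)=((b_s)\beta(s)_r(i))_s$. *)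

theory Defs
  imports "HOL-Library.FuncSet"
begin

text \<open>An I-set on carrier X: xl i is the left action (End_l, composition g first),
 xr i is the right action (End_r, x(fg) = ((x)f)g), both map X into X,
 are semigroup homomorphisms, and commute.\<close>
definition Iset :: "'x set \<Rightarrow> ('i::semigroup_mult \<Rightarrow> 'x \<Rightarrow> 'x) \<Rightarrow> ('i \<Rightarrow> 'x \<Rightarrow> 'x) \<Rightarrow> bool" where
  "Iset X xl xr \<longleftrightarrow>
     (\<forall>i. \<forall>x\<in>X. xl i x \<in> X) \<and> (\<forall>i. \<forall>x\<in>X. xr i x \<in> X) \<and>
     (\<forall>i j. \<forall>x\<in>X. xl (i * j) x = xl i (xl j x)) \<and>
     (\<forall>i j. \<forall>x\<in>X. xr (i * j) x = xr j (xr i x)) \<and>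
     (\<forall>i j. \<forall>x\<in>X. xr j (xl i x) = xl i (xr j x))"

definition semi_invertible :: "'x set \<Rightarrow> ('i \<Rightarrow> 'x \<Rightarrow> 'x) \<Rightarrow> ('i \<Rightarrow> 'x \<Rightarrow> 'x) \<Rightarrow> bool" where
  "semi_invertible X xl xr \<longleftrightarrow> (\<forall>i. bij_betw (xl i) X X \<or> bij_betw (xr i) X X)"

definition equivariant :: "'x set \<Rightarrow> ('i \<Rightarrow> 'x \<Rightarrow> 'x) \<Rightarrow> ('i \<Rightarrow> 'x \<Rightarrow> 'x) \<Rightarrow>
    'y set \<Rightarrow> ('i \<Rightarrow> 'y \<Rightarrow> 'y) \<Rightarrow> ('i \<Rightarrow> 'y \<Rightarrow> 'y) \<Rightarrow> ('x \<Rightarrow> 'y) \<Rightarrow> bool" where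
  "equivariant X xl xr Y yl yr f \<longleftrightarrow>
     (\<forall>x\<in>X. f x \<in> Y) \<and>
     (\<forall>i. \<forall>x\<in>X. yr i (f (xl i x)) = yl i (f (xr i x)))"

definition prod_act :: "'s set \<Rightarrow> ('s \<Rightarrow> 'i \<Rightarrow> 'b \<Rightarrow> 'b) \<Rightarrow> 'i \<Rightarrow> ('s \<Rightarrow> 'b) \<Rightarrow> ('s \<Rightarrow> 'b)" where
  "prod_act S act i b = (\<lambda>s\<in>S. act s i (b s))"

end

theory Submission
  imports Defs
begin

lemma comp_lemma:
  assumes "\<forall>x\<in>X. l x \<in> X" "\<forall>x\<in>X. r x \<in> X" "\<forall>x\<in>X. r (l x) = l (r x)"
    "bij_betw l X X \<or> bij_betw r X X" "u \<in> X" "v \<in> X" "r u = l v"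
  shows "\<exists>w\<in>X. l w = u \<and> r w = v"
  using assms(4)
proof
  assume b: "bij_betw l X X"
  then obtain w where w: "w \<in> X" "l w = u" using assms(5) bij_betw_imp_surj_on by (metis imageE)
  have "l (r w) = l v" using assms w by metis
  moreover have "inj_on l X" using b bij_betw_def by blast
  ultimately have "r w = v" using assms w by (metis inj_on_def)
  thus ?thesis using w by blast
next
  assume b: "bij_betw r X X"
  then obtain w where w: "w \<in> X" "r w = v" using assms(6) bij_betw_imp_surj_on by (metis imageE)
  have "r (l w) = r u" using assms w by metis
  moreover have "inj_on r X" using b bij_betw_def by blast
  ultimately have "l w = u" using assms w by (metis inj_on_def)
  thus ?thesis using w by blast
qed

theorem mainTheorem4:
  fixes A :: "'a set" and al ar :: "'i::semigroup_mult \<Rightarrow> 'a \<Rightarrow> 'a"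
    and C :: "'c set" and cl cr :: "'i \<Rightarrow> 'c \<Rightarrow> 'c"
    and S :: "'s set" and B :: "'s \<Rightarrow> 'b set" and bl br :: "'s \<Rightarrow> 'i \<Rightarrow> 'b \<Rightarrow> 'b"
    and f :: "'a \<Rightarrow> ('s \<Rightarrow> 'b)" and g :: "('s \<Rightarrow> 'b) \<Rightarrow> 'c"
  assumes "Iset A al ar" and "Iset C cl cr"
    and "\<forall>s\<in>S. Iset (B s) (bl s) (br s)"
    and "\<forall>s\<in>S. semi_invertible (B s) (bl s) (br s)"
    and "equivariant A al ar (PiE S B) (prod_act S bl) (prod_act S br) f"
    and "equivariant (PiE S B) (prod_act S bl) (prod_act S br) C cl cr g"
  shows "equivariant A al ar C cl cr (g \<circ> f)"
  unfolding equivariant_def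
proof (intro conjI allI ballI)
  fix x assume "x \<in> A"
  then show "(g \<circ> f) x \<in> C" using assms(5,6) unfolding equivariant_def by auto
next
  fix i x assume x: "x \<in> A"
  define u where "u = f (al i x)"
  define v where "v = f (ar i x)"
  have uP: "u \<in> PiE S B" using assms(1,5) x unfolding u_def equivariant_def Iset_def by auto
  have vP: "v \<in> PiE S B" using assms(1,5) x unfolding v_def equivariant_def Iset_def by auto
  have eq: "prod_act S br i u = prod_act S bl i v"
    using assms(5) x unfolding u_def v_def equivariant_def by auto
  have "\<forall>s\<in>S. \<exists>w\<in>B s. bl s i w = u s \<and> br s i w = v s"
  proof
    fix s assume s: "s \<in> S"
    have "br s i (u s) = bl s i (v s)" using fun_cong[OF eq, of s] s unfolding prod_act_def by simp
    moreover have "Iset (B s) (bl s) (br s)" "semi_invertible (B s) (bl s) (br s)" using assms(3,4) s by auto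
    ultimately show "\<exists>w\<in>B s. bl s i w = u s \<and> br s i w = v s"
      using comp_lemma[of "B s" "bl s i" "br s i" "u s" "v s"] uP vP s
      unfolding Iset_def semi_invertible_def by (auto simp: PiE_iff)
  qed
  then obtain W where W: "\<forall>s\<in>S. W s \<in> B s \<and> bl s i (W s) = u s \<and> br s i (W s) = v s"
    by metis
  define w where "w = restrict W S"
  have wP: "w \<in> PiE S B" using W unfolding w_def by auto
  have "prod_act S bl i w = u"
    using W uP unfolding w_def prod_act_def by (auto simp: PiE_iff extensional_def)
  moreover have "prod_act S br i w = v"
    using W vP unfolding w_def prod_act_def by (auto simp: PiE_iff extensional_def)
  moreover have "cr i (g (prod_act S bl i w)) = cl i (g (prod_act S br i w))"
    using assms(6) wP unfolding equivariant_def by blast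
  ultimately show "cr i ((g \<circ> f) (al i x)) = cl i ((g \<circ> f) (ar i x))"
    unfolding u_def v_def by simp
qed

end
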